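(* Let $\gamma_1(t)=e^{-\pi t^2}$ and $\gamma_2(t)=2\pi t\,e^{-\pi t^2}$ for $t\in\mathbb{R}$. Let $\varphi,\psi\in L^2(\mathbb{R})$ satisfy $|\mathcal{F}[\gamma_1\varphi](\xi)|=|\mathcal{F}[\gamma_1\psi](\xi)|$ and $|\mathcal{F}[\gamma_2\varphi](\xi)|=|\mathcal{F}[\gamma_2\psi](\xi)|$ for all $\xi\in\mathbb{R}$. Then there exists $c\in\mathbb{C}$ with $|c|=1$ such that either $\psi=c\varphi$ or $\psi=c\varphi^*$, where $\varphi^*(x)=\overline{\varphi(-x)}$.
   Context: The Fourier transform is normalized as $\mathcal{F}f(\xi)=\hat f(\xi)=\int_{\mathbb{R}}f(x)e^{-2\pi i x\xi}\,dx$ for $f\in L^1(\mathbb{R})$, extended to $L^2(\mathbb{R})$ in the usual way. Equalities of functions in $L^2$ are understood almost everywhere. *)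

theory Defs
  imports "HOL-Analysis.Analysis"
begin

text \<open>Square-integrable complex-valued functions on the real line (representatives of L^2 classes).\<close>
definition L2 :: "(real \<Rightarrow> complex) set" where
  "L2 = {f. f \<in> borel_measurable lborel \<and> integrable lborel (\<lambda>x. (cmod (f x))^2)}"

definition fourier :: "(real \<Rightarrow> complex) \<Rightarrow> real \<Rightarrow> complex" where
  "fourier f \<xi> = (LINT x|lborel. f x * cis (- 2 * pi * x * \<xi>))"

definition gamma1 :: "real \<Rightarrow> complex" where
  "gamma1 t = complex_of_real (exp (- pi * t^2))"

definition gamma2 :: "real \<Rightarrow> complex" where
  "gamma2 t = complex_of_real (2 * pi * t * exp (- pi * t^2))"

end

theory Submission
  imports Defs "HOL-Probability.Probability" "HOL-Complex_Analysis.Complex_Analysis"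
begin


lemma zero_islimpt_reals: "(0::complex) islimpt range complex_of_real"
proof -
  have "(\<lambda>n. complex_of_real (inverse (real (Suc n)))) \<longlonglongrightarrow> 0"
    using tendsto_of_real[OF LIMSEQ_inverse_real_of_nat, where 'a=complex] by simp
  then show ?thesis
    apply (rule islimpt_sequential[THEN iffD2, OF exI, OF conjI[rotated]])
    apply (intro allI conjI)
     apply (rule DiffI, rule rangeI)
    apply (simp del: of_real_inverse of_real_of_nat_eq)
    done
qed

lemma entire_zero_on_reals:
  assumes "G holomorphic_on UNIV" "\<And>x::real. G (complex_of_real x) = 0"
  shows "G z = 0"
  using analytic_continuation[OF assms(1) open_UNIV connected_UNIV subset_UNIV UNIV_I zero_islimpt_reals]
    assms(2) by auto

lemma entire_mult_zero:
  assumes f: "f holomorphic_on UNIV" and g: "g holomorphic_on UNIV"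
    and fg: "\<And>z. f z * g z = 0"
  shows "(\<forall>z. f z = 0) \<or> (\<forall>z. g z = 0)"
proof (cases "\<forall>z. g z = 0")
  case False
  then obtain z0 where z0: "g z0 \<noteq> 0" by auto
  have "continuous_on UNIV g" using g holomorphic_on_imp_continuous_on by blast
  then have "isCont g z0" by (simp add: continuous_on_eq_continuous_at)
  from continuous_at_avoid[OF this z0] obtain e where e: "e > 0" "\<And>z. dist z0 z < e \<Longrightarrow> g z \<noteq> 0"
    by auto
  have fz: "\<And>z. z \<in> ball z0 e \<Longrightarrow> f z = 0"
    using e fg by (metis mem_ball mult_eq_0_iff)
  have "z0 islimpt ball z0 e" using e by (simp add: islimpt_ball)
  then have "\<forall>z. f z = 0"
    using analytic_continuation[OF f open_UNIV connected_UNIV subset_UNIV UNIV_I _ fz] by blast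
  then show ?thesis by blast
qed auto

lemma entire_deriv:
  assumes "G holomorphic_on UNIV"
  shows "(G has_field_derivative deriv G z) (at z)"
  using assms holomorphic_derivI open_UNIV by blast

lemma entire_deriv_holo:
  assumes "G holomorphic_on UNIV"
  shows "deriv G holomorphic_on UNIV"
  using assms holomorphic_deriv open_UNIV by blast

lemma entire_refl:
  assumes "G holomorphic_on UNIV"
  shows "(\<lambda>z. cnj (G (cnj z))) holomorphic_on UNIV"
proof -
  have "cnj \<circ> G \<circ> cnj holomorphic_on UNIV"
    by (rule holomorphic_on_compose_cnj_cnj) (use assms in auto)
  then show ?thesis by (simp add: o_def)
qed

lemma entire_refl_deriv:
  assumes "G holomorphic_on UNIV"
  shows "((\<lambda>z. cnj (G (cnj z))) has_field_derivative cnj (deriv G (cnj z))) (at z)"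
  using has_field_derivative_cnj_cnj[OF entire_deriv[OF assms, of "cnj z"]] by (simp add: o_def)

lemma core:
  assumes G: "G holomorphic_on UNIV" and H: "H holomorphic_on UNIV"
    and P: "\<And>z. H z * cnj (H (cnj z)) = G z * cnj (G (cnj z))"
    and D: "\<And>z. deriv H z * cnj (H (cnj z)) = deriv G z * cnj (G (cnj z))"
  shows "\<exists>c. cmod c = 1 \<and> (\<forall>z. H z = c * G z)"
proof (cases "\<forall>z. G z = 0")
  case True
  have "H z = 0" for z
  proof (rule entire_zero_on_reals[OF H])
    fix x :: real
    have "H x * cnj (H x) = 0" using P[of x] True by simp
    then show "H x = 0" by simp
  qed
  then show ?thesis using True by (intro exI[of _ 1]) auto
next
  case False
  then obtain x0 :: real where Gx0: "G x0 \<noteq> 0"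
    using entire_zero_on_reals[OF G] by blast
  have "H x0 * cnj (H x0) = G x0 * cnj (G x0)" using P[of x0] by simp
  then have "complex_of_real (cmod (H x0) ^ 2) = complex_of_real (cmod (G x0) ^ 2)"
    by (simp only: complex_norm_square)
  then have "cmod (H x0) ^ 2 = cmod (G x0) ^ 2" by (simp only: of_real_eq_iff)
  then have nHG: "cmod (H x0) = cmod (G x0)" by (simp add: power2_eq_iff_nonneg)
  then have Hx0: "H x0 \<noteq> 0" using Gx0 by auto
  define c where "c = H x0 / G x0"
  have c1: "cmod c = 1" using nHG Gx0 by (simp add: c_def norm_divide)
  define W where "W z = deriv H z * G z - deriv G z * H z" for z
  have WH: "W holomorphic_on UNIV" unfolding W_def
    by (intro holomorphic_intros entire_deriv_holo G H)
  have GHs: "(\<lambda>z. cnj (G (cnj z)) * cnj (H (cnj z))) holomorphic_on UNIV"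
    by (intro holomorphic_intros entire_refl G H)
  have "W z * (cnj (G (cnj z)) * cnj (H (cnj z))) = 0" for z
  proof -
    have "W z * (cnj (G (cnj z)) * cnj (H (cnj z)))
        = (deriv H z * cnj (H (cnj z))) * (G z * cnj (G (cnj z)))
          - (deriv G z * cnj (G (cnj z))) * (H z * cnj (H (cnj z)))"
      by (simp add: W_def algebra_simps)
    also have "\<dots> = 0" by (simp add: P D)
    finally show ?thesis .
  qed
  from entire_mult_zero[OF WH GHs this]
  have W0: "\<And>z. W z = 0"
  proof
    assume "\<forall>z. cnj (G (cnj z)) * cnj (H (cnj z)) = 0"
    then have "cnj (G (cnj x0)) * cnj (H (cnj x0)) = 0" by blast
    then show "\<And>z. W z = 0" using Gx0 Hx0 by simp
  qed blast
  define K where "K z = H z - c * G z" for z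
  have KH: "K holomorphic_on UNIV" unfolding K_def by (intro holomorphic_intros G H)
  have "continuous_on UNIV G" using G holomorphic_on_imp_continuous_on by blast
  then have "isCont G x0" by (simp add: continuous_on_eq_continuous_at)
  from continuous_at_avoid[OF this Gx0] obtain e where e: "e > 0"
    "\<And>z. dist (complex_of_real x0) z < e \<Longrightarrow> G z \<noteq> 0" by auto
  have dq: "((\<lambda>z. K z / G z) has_field_derivative 0) (at z within ball x0 e)"
    if "z \<in> ball (complex_of_real x0) e" for z
  proof -
    have Gz: "G z \<noteq> 0" using e that by auto
    have "((\<lambda>z. K z / G z) has_field_derivative
        ((deriv H z - c * deriv G z) * G z - K z * deriv G z) / (G z * G z)) (at z)"
    proof -
      have dK: "(K has_field_derivative deriv H z - c * deriv G z) (at z)" unfolding K_def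
        by (rule DERIV_diff[OF entire_deriv[OF H] DERIV_cmult[OF entire_deriv[OF G]]])
      show ?thesis by (rule DERIV_divide[OF dK entire_deriv[OF G] Gz])
    qed
    moreover have "(deriv H z - c * deriv G z) * G z - K z * deriv G z = W z"
      by (simp add: K_def W_def algebra_simps)
    ultimately show ?thesis using W0 by (auto intro: has_field_derivative_at_within)
  qed
  from has_field_derivative_zero_constant[OF convex_ball dq]
  obtain k where k: "\<And>z. z \<in> ball (complex_of_real x0) e \<Longrightarrow> K z / G z = k" by blast
  have "K x0 = 0" by (simp add: K_def c_def Gx0)
  then have "k = 0" using k[of x0] e by simp
  then have Kb: "\<And>z. z \<in> ball (complex_of_real x0) e \<Longrightarrow> K z = 0"
    using k e by (metis dist_commute divide_eq_0_iff mem_ball)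
  have "complex_of_real x0 islimpt ball (complex_of_real x0) e" using e by (simp add: islimpt_ball)
  then have "\<forall>z. K z = 0"
    using analytic_continuation[OF KH open_UNIV connected_UNIV subset_UNIV UNIV_I _ Kb] by blast
  then show ?thesis using c1 by (intro exI[of _ c]) (auto simp: K_def)
qed

lemma refl_deriv_eq:
  assumes "G holomorphic_on UNIV"
  shows "deriv (\<lambda>z. cnj (G (cnj z))) z = cnj (deriv G (cnj z))"
  using DERIV_imp_deriv[OF entire_refl_deriv[OF assms]] .

lemma prod_refl_real:
  assumes "G holomorphic_on UNIV" "H holomorphic_on UNIV"
    and "\<And>x::real. cmod (G x) = cmod (H x)"
  shows "H z * cnj (H (cnj z)) = G z * cnj (G (cnj z))"
proof -
  define F where "F z = H z * cnj (H (cnj z)) - G z * cnj (G (cnj z))" for z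
  have hol: "F holomorphic_on UNIV" unfolding F_def
    by (intro holomorphic_intros entire_refl assms)
  have "F x = 0" for x :: real
  proof -
    have "H x * cnj (H x) = G x * cnj (G x)"
      by (metis assms(3) complex_norm_square)
    then show ?thesis by (simp add: F_def)
  qed
  from entire_zero_on_reals[OF hol this] have "F z = 0" .
  then show ?thesis by (simp add: F_def)
qed

lemma core2:
  assumes G: "G holomorphic_on UNIV" and H: "H holomorphic_on UNIV"
    and n0: "\<And>x::real. cmod (G x) = cmod (H x)"
    and n1: "\<And>x::real. cmod (deriv G x) = cmod (deriv H x)"
  shows "\<exists>c. cmod c = 1 \<and> ((\<forall>z. H z = c * G z) \<or> (\<forall>z. H z = c * cnj (G (cnj z))))"
proof -
  have P: "\<And>z. H z * cnj (H (cnj z)) = G z * cnj (G (cnj z))"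
    by (rule prod_refl_real[OF G H n0])
  have Q: "\<And>z. deriv H z * cnj (deriv H (cnj z)) = deriv G z * cnj (deriv G (cnj z))"
    by (rule prod_refl_real[OF entire_deriv_holo[OF G] entire_deriv_holo[OF H] n1])
  have dp: "((\<lambda>z. F z * cnj (F (cnj z))) has_field_derivative
              deriv F z * cnj (F (cnj z)) + F z * cnj (deriv F (cnj z))) (at z)"
    if F: "F holomorphic_on UNIV" for F z
    using DERIV_mult[OF entire_deriv[OF F] entire_refl_deriv[OF F]] by (simp add: mult.commute)
  have S: "deriv H z * cnj (H (cnj z)) + H z * cnj (deriv H (cnj z))
         = deriv G z * cnj (G (cnj z)) + G z * cnj (deriv G (cnj z))" for z
  proof -
    have "(\<lambda>z. H z * cnj (H (cnj z))) = (\<lambda>z. G z * cnj (G (cnj z)))" using P by auto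
    then show ?thesis using DERIV_unique[OF dp[OF H, of z]] dp[OF G, of z] by metis
  qed
  define a where "a z = deriv G z * cnj (G (cnj z))" for z
  define b where "b z = G z * cnj (deriv G (cnj z))" for z
  define e where "e z = deriv H z * cnj (H (cnj z))" for z
  have "(e z - a z) * (e z - b z) = 0" for z
  proof -
    have ab: "a z * b z = (G z * cnj (G (cnj z))) * (deriv G z * cnj (deriv G (cnj z)))"
      by (simp add: a_def b_def algebra_simps)
    have ed: "e z * (H z * cnj (deriv H (cnj z))) = (H z * cnj (H (cnj z))) * (deriv H z * cnj (deriv H (cnj z)))"
      by (simp add: e_def algebra_simps)
    have "(e z - a z) * (e z - b z) = e z * e z - (a z + b z) * e z + a z * b z"
      by (simp add: algebra_simps)
    also have "a z + b z = e z + H z * cnj (deriv H (cnj z))"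
      using S[of z] by (simp add: a_def b_def e_def)
    also have "a z * b z = e z * (H z * cnj (deriv H (cnj z)))"
      using ab ed P[of z] Q[of z] by simp
    finally show ?thesis by (simp add: algebra_simps)
  qed
  moreover have "(\<lambda>z. e z - a z) holomorphic_on UNIV" "(\<lambda>z. e z - b z) holomorphic_on UNIV"
    unfolding a_def b_def e_def
    by (intro holomorphic_intros entire_refl entire_deriv_holo G H)+
  ultimately have "(\<forall>z. e z - a z = 0) \<or> (\<forall>z. e z - b z = 0)"
    using entire_mult_zero by blast
  then show ?thesis
  proof
    assume "\<forall>z. e z - a z = 0"
    then have "\<And>z. deriv H z * cnj (H (cnj z)) = deriv G z * cnj (G (cnj z))"
      by (simp add: a_def e_def)
    from core[OF G H P this] show ?thesis by blast
  next
    assume eb: "\<forall>z. e z - b z = 0"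
    define G0 where "G0 z = cnj (G (cnj z))" for z
    have G0: "G0 holomorphic_on UNIV" unfolding G0_def by (rule entire_refl[OF G])
    have dG0: "deriv G0 z = cnj (deriv G (cnj z))" for z
      unfolding G0_def by (rule refl_deriv_eq[OF G])
    have P0: "\<And>z. H z * cnj (H (cnj z)) = G0 z * cnj (G0 (cnj z))"
      using P by (simp add: G0_def mult.commute)
    have D0: "\<And>z. deriv H z * cnj (H (cnj z)) = deriv G0 z * cnj (G0 (cnj z))"
      using eb by (simp add: dG0 G0_def b_def e_def mult.commute)
    from core[OF G0 H P0 D0] show ?thesis by (auto simp: G0_def)
  qed
qed



lemma norm_exp_sub_1_sub:
  fixes z :: complex
  shows "norm (exp z - 1 - z) \<le> norm z ^ 2 * exp (norm z)"
proof (cases "z = 0")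
  case False
  have sums: "(\<lambda>k. z ^ (k + 2) /\<^sub>R fact (k + 2)) sums (exp z - (\<Sum>k<2. z ^ k /\<^sub>R fact k))"
    by (intro sums_split_initial_segment exp_converges)
  have "summable (\<lambda>k. norm z ^ (k + 2) /\<^sub>R fact (k + 2))"
    using summable_norm_exp[of z]
    by (intro summable_norm summable_ignore_initial_segment)
       (auto simp: norm_power norm_divide divide_simps)
  also have "?this \<longleftrightarrow> summable (\<lambda>k. norm z ^ 2 * (norm z ^ k / fact (k +2)))"
    by (simp add: power_add mult_ac divide_simps power2_eq_square del: of_nat_Suc of_nat_add)
  also have "\<dots> \<longleftrightarrow> summable (\<lambda>k. norm z ^ k / fact (k + 2))"
    by (subst summable_cmult_iff) (use \<open>z \<noteq> 0\<close> in auto)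
  finally have summable: "summable (\<lambda>k. norm z ^ k / fact (k + 2))" .
  have "exp z - 1 - z = (\<Sum>k. z ^ (k + 2) / fact (k + 2))"
    using sums by (simp add: sums_iff scaleR_conv_of_real divide_simps eval_nat_numeral)
  also have "norm \<dots> \<le> (\<Sum>k. norm (z ^ (k + 2) / fact (k + 2)))"
    using summable_norm_exp[of z]
    by (intro summable_norm summable_ignore_initial_segment)
       (auto simp: norm_power norm_divide divide_simps)
  also have "\<dots> = (\<Sum>k. norm z ^ 2 * (norm z ^ k / fact (k + 2)))"
    by (simp add: power_add norm_power norm_divide mult_ac norm_mult power2_eq_square del: of_nat_Suc)
  also have "\<dots> = norm z ^ 2 * (\<Sum>k. norm z ^ k / fact (k + 2))"
    using summable by (rule suminf_mult)
  also have "\<dots> \<le> norm z ^ 2 * exp (norm z)"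
  proof (intro mult_left_mono, rule sums_le)
    show "(\<lambda>k. norm z ^ k / fact (k + 2)) sums (\<Sum>k. norm z ^ k / fact (k + 2))"
      using summable by blast
    show "(\<lambda>k. norm z ^ k / fact k) sums exp (norm z)"
      using exp_converges[of "norm z"] by (simp add: divide_inverse mult.commute)
  next
    fix k :: nat
    show "norm z ^ k / fact (k + 2) \<le> norm z ^ k / fact k"
      by (intro divide_left_mono fact_mono) auto
  qed auto
  finally show ?thesis .
qed auto

definition Qm :: "real \<Rightarrow> real \<Rightarrow> real" where
  "Qm R t = (1 + t\<^sup>2) * exp (- pi * t\<^sup>2 + R * \<bar>t\<bar>)"

lemma Qm_nonneg: "Qm R t \<ge> 0" by (simp add: Qm_def)

lemma Qm_measurable[measurable]: "Qm R \<in> borel_measurable borel"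
  unfolding Qm_def by measurable

lemma Qm_sq_integrable:
  assumes "R \<ge> 0"
  shows "integrable lborel (\<lambda>t. (Qm R t)\<^sup>2)"
proof -
  let ?g = "\<lambda>t. exp (R\<^sup>2) * sqrt (2 * pi) *
      (std_normal_density t + 2 * (std_normal_density t * t ^ 2) + std_normal_density t * t ^ 4)"
  have gi: "integrable lborel ?g"
  proof -
    have i0: "integrable lborel (\<lambda>x. std_normal_density x)"
      using integrable_std_normal_moment[of 0] by simp
    show ?thesis
      by (rule Bochner_Integration.integrable_mult_right, rule Bochner_Integration.integrable_add[OF Bochner_Integration.integrable_add[OF i0
          Bochner_Integration.integrable_mult_right[OF integrable_std_normal_moment]] integrable_std_normal_moment])
  qed
  show ?thesis
  proof (rule Bochner_Integration.integrable_bound[OF gi])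
    show "(\<lambda>t. (Qm R t)\<^sup>2) \<in> borel_measurable lborel" by measurable
    show "AE t in lborel. norm ((Qm R t)\<^sup>2) \<le> norm (?g t)"
    proof (rule AE_I2)
      fix t :: real
      have pi3: "pi \<ge> 3" using pi_gt3 by simp
      have ex: "- 2 * pi * t\<^sup>2 + 2 * R * \<bar>t\<bar> \<le> R\<^sup>2 + (- t\<^sup>2 / 2)"
      proof -
        have "0 \<le> (R - \<bar>t\<bar>)\<^sup>2 + (2 * pi - 3/2) * t\<^sup>2"
          using pi3 by (intro add_nonneg_nonneg) auto
        also have "(R - \<bar>t\<bar>)\<^sup>2 = R\<^sup>2 - 2 * R * \<bar>t\<bar> + t\<^sup>2"
          by (simp add: power2_eq_square algebra_simps)
        finally show ?thesis by (simp add: algebra_simps)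
      qed
      have "(Qm R t)\<^sup>2 = (1 + t\<^sup>2)\<^sup>2 * exp (- 2 * pi * t\<^sup>2 + 2 * R * \<bar>t\<bar>)"
        by (simp add: Qm_def power_mult_distrib exp_double[symmetric] algebra_simps power2_eq_square
            flip: exp_add)
      also have "\<dots> \<le> (1 + t\<^sup>2)\<^sup>2 * exp (R\<^sup>2 + (- t\<^sup>2 / 2))"
        using ex by (intro mult_left_mono) auto
      also have "\<dots> = (1 + t\<^sup>2)\<^sup>2 * (exp (R\<^sup>2) * exp (- t\<^sup>2 / 2))"
        by (simp only: exp_add)
      also have "\<dots> = ?g t"
        by (simp add: std_normal_density_def power2_eq_square algebra_simps power4_eq_xxxx)
      finally show "norm ((Qm R t)\<^sup>2) \<le> norm (?g t)" by simp
    qed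
  qed
qed

lemma L2_Qm_integrable:
  assumes f: "f \<in> L2" and R: "R \<ge> 0"
  shows "integrable lborel (\<lambda>t. cmod (f t) * Qm R t)"
proof -
  have fm: "f \<in> borel_measurable lborel" and fi: "integrable lborel (\<lambda>x. (cmod (f x))\<^sup>2)"
    using f by (auto simp: L2_def)
  have gi: "integrable lborel (\<lambda>t. (cmod (f t))\<^sup>2 + (Qm R t)\<^sup>2)"
    by (intro Bochner_Integration.integrable_add fi Qm_sq_integrable[OF R])
  show ?thesis
  proof (rule Bochner_Integration.integrable_bound[OF gi])
    show "(\<lambda>t. cmod (f t) * Qm R t) \<in> borel_measurable lborel"
      using fm by measurable
    show "AE t in lborel. norm (cmod (f t) * Qm R t) \<le> norm ((cmod (f t))\<^sup>2 + (Qm R t)\<^sup>2)"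
    proof (rule AE_I2)
      fix t
      have "cmod (f t) * Qm R t \<le> (cmod (f t))\<^sup>2 + (Qm R t)\<^sup>2"
      proof -
        have "2 * cmod (f t) * Qm R t \<le> (cmod (f t))\<^sup>2 + (Qm R t)\<^sup>2"
          by (rule sum_squares_bound)
        moreover have "0 \<le> cmod (f t) * Qm R t" using Qm_nonneg[of R t] by simp
        ultimately show ?thesis by linarith
      qed
      then show "norm (cmod (f t) * Qm R t) \<le> norm ((cmod (f t))\<^sup>2 + (Qm R t)\<^sup>2)"
        using Qm_nonneg[of R t] by simp
    qed
  qed
qed



definition gk :: "complex \<Rightarrow> real \<Rightarrow> complex" where
  "gk z t = exp (- complex_of_real (pi * t\<^sup>2) - 2 * complex_of_real pi * \<i> * complex_of_real t * z)"

definition BT :: "(real \<Rightarrow> complex) \<Rightarrow> complex \<Rightarrow> complex" where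
  "BT f z = (LINT t|lborel. f t * gk z t)"

definition BT1 :: "(real \<Rightarrow> complex) \<Rightarrow> complex \<Rightarrow> complex" where
  "BT1 f z = (LINT t|lborel. complex_of_real t * f t * gk z t)"

lemma norm_gk: "cmod (gk z t) = exp (- pi * t\<^sup>2 + 2 * pi * t * Im z)"
  by (simp add: gk_def norm_exp_eq_Re)

lemma gk_add: "gk (z + h) t = gk z t * exp (- 2 * complex_of_real pi * \<i> * complex_of_real t * h)"
  by (simp add: gk_def algebra_simps flip: exp_add)

lemma gk_measurable[measurable]: "gk z \<in> borel_measurable borel"
  unfolding gk_def by (intro borel_measurable_continuous_onI continuous_intros)

lemma gk_le_Qm:
  assumes "R \<ge> 2 * pi * \<bar>Im z\<bar>"
  shows "cmod (gk z t) * (1 + t\<^sup>2) \<le> Qm R t"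
proof -
  have "2 * pi * t * Im z \<le> 2 * pi * \<bar>Im z\<bar> * \<bar>t\<bar>"
    by (metis abs_ge_self abs_mult abs_of_pos mult.assoc mult.commute pi_gt_zero zero_less_mult_iff
        zero_less_numeral)
  also have "\<dots> \<le> R * \<bar>t\<bar>" using assms by (intro mult_right_mono) auto
  finally have "exp (- pi * t\<^sup>2 + 2 * pi * t * Im z) \<le> exp (- pi * t\<^sup>2 + R * \<bar>t\<bar>)" by simp
  then show ?thesis unfolding norm_gk Qm_def
    by (subst mult.commute) (rule mult_left_mono, auto)
qed

lemma abs_le_1_sq: "\<bar>t::real\<bar> \<le> 1 + t\<^sup>2"
proof -
  have "0 \<le> (\<bar>t\<bar> - 1/2)\<^sup>2 + 3/4" by simp
  then show ?thesis by (simp add: power2_eq_square algebra_simps)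
qed

lemma BT_integrable:
  assumes f: "f \<in> L2"
  shows "integrable lborel (\<lambda>t. f t * gk z t)"
    and "integrable lborel (\<lambda>t. complex_of_real t * f t * gk z t)"
proof -
  let ?R = "2 * pi * \<bar>Im z\<bar>"
  have fm: "f \<in> borel_measurable lborel" using f by (simp add: L2_def)
  have Ii: "integrable lborel (\<lambda>t. cmod (f t) * Qm ?R t)"
    by (rule L2_Qm_integrable[OF f]) simp
  have b: "cmod (gk z t) * (1 + t\<^sup>2) \<le> Qm ?R t" for t by (rule gk_le_Qm) simp
  show "integrable lborel (\<lambda>t. f t * gk z t)"
  proof (rule Bochner_Integration.integrable_bound[OF Ii])
    show "(\<lambda>t. f t * gk z t) \<in> borel_measurable lborel" using fm by measurable
    show "AE t in lborel. norm (f t * gk z t) \<le> norm (cmod (f t) * Qm ?R t)"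
    proof (rule AE_I2)
      fix t
      have "cmod (gk z t) \<le> cmod (gk z t) * (1 + t\<^sup>2)"
        by (simp add: mult_le_cancel_left1)
      then have "cmod (gk z t) \<le> Qm ?R t" using b[of t] by linarith
      then show "norm (f t * gk z t) \<le> norm (cmod (f t) * Qm ?R t)"
        using Qm_nonneg[of ?R t] by (simp add: norm_mult mult_left_mono)
    qed
  qed
  show "integrable lborel (\<lambda>t. complex_of_real t * f t * gk z t)"
  proof (rule Bochner_Integration.integrable_bound[OF Ii])
    show "(\<lambda>t. complex_of_real t * f t * gk z t) \<in> borel_measurable lborel" using fm by measurable
    show "AE t in lborel. norm (complex_of_real t * f t * gk z t) \<le> norm (cmod (f t) * Qm ?R t)"
    proof (rule AE_I2)
      fix t
      have "\<bar>t\<bar> * cmod (gk z t) \<le> cmod (gk z t) * (1 + t\<^sup>2)"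
        using mult_right_mono[OF abs_le_1_sq[of t], of "cmod (gk z t)"] by (simp add: mult.commute)
      then have "\<bar>t\<bar> * cmod (gk z t) \<le> Qm ?R t" using b[of t] by linarith
      then have "cmod (f t) * (\<bar>t\<bar> * cmod (gk z t)) \<le> cmod (f t) * Qm ?R t"
        by (simp add: mult_left_mono)
      then show "norm (complex_of_real t * f t * gk z t) \<le> norm (cmod (f t) * Qm ?R t)"
        using Qm_nonneg[of ?R t] by (simp add: norm_mult mult_ac)
    qed
  qed
qed

lemma gk_err_bound:
  assumes "R = 2 * pi * \<bar>Im z\<bar> + 2 * pi"
  shows "cmod (gk z t) * (t\<^sup>2 * exp (2 * pi * \<bar>t\<bar>)) \<le> Qm R t"
proof -
  have "2 * pi * t * Im z \<le> 2 * pi * \<bar>Im z\<bar> * \<bar>t\<bar>"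
    by (metis abs_ge_self abs_mult abs_of_pos mult.assoc mult.commute pi_gt_zero zero_less_mult_iff
        zero_less_numeral)
  then have "- pi * t\<^sup>2 + 2 * pi * t * Im z + 2 * pi * \<bar>t\<bar> \<le> - pi * t\<^sup>2 + R * \<bar>t\<bar>"
    using assms by (simp add: algebra_simps)
  then have e: "exp (- pi * t\<^sup>2 + 2 * pi * t * Im z) * exp (2 * pi * \<bar>t\<bar>) \<le> exp (- pi * t\<^sup>2 + R * \<bar>t\<bar>)"
    by (simp flip: exp_add)
  have "cmod (gk z t) * (t\<^sup>2 * exp (2 * pi * \<bar>t\<bar>))
      = t\<^sup>2 * (exp (- pi * t\<^sup>2 + 2 * pi * t * Im z) * exp (2 * pi * \<bar>t\<bar>))"
    by (simp add: norm_gk)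
  also have "\<dots> \<le> (1 + t\<^sup>2) * exp (- pi * t\<^sup>2 + R * \<bar>t\<bar>)"
    by (rule mult_mono[OF _ e]) auto
  finally show ?thesis by (simp add: Qm_def)
qed

lemma BT_deriv:
  assumes f: "f \<in> L2"
  shows "(BT f has_field_derivative (- 2 * complex_of_real pi * \<i>) * BT1 f z) (at z)"
proof -
  define R where "R = 2 * pi * \<bar>Im z\<bar> + 2 * pi"
  define D where "D = (- 2 * complex_of_real pi * \<i>) * BT1 f z"
  define K where "K = 4 * pi\<^sup>2 * (LINT t|lborel. cmod (f t) * Qm R t)"
  have Ii: "integrable lborel (\<lambda>t. cmod (f t) * Qm R t)"
    by (rule L2_Qm_integrable[OF f]) (simp add: R_def)
  have main: "norm ((BT f y - BT f z) / (y - z) - D) \<le> K * norm (y - z)"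
    if y: "y \<noteq> z" "norm (y - z) \<le> 1" for y
  proof -
    define h where "h = y - z"
    have h0: "h \<noteq> 0" and h1: "norm h \<le> 1" using y by (auto simp: h_def)
    define w where "w t = - 2 * complex_of_real pi * \<i> * complex_of_real t * h" for t
    have gy: "gk y t = gk z t * exp (w t)" for t
      using gk_add[of z h t] by (simp add: h_def w_def)
    note I1 = BT_integrable(1)[OF f, of y] and I2 = BT_integrable(1)[OF f, of z]
      and I3 = BT_integrable(2)[OF f, of z]
    define F where "F t = (f t * gk y t - f t * gk z t) / h
                  - (- 2 * complex_of_real pi * \<i>) * (complex_of_real t * f t * gk z t)" for t
    have IF: "integrable lborel F" unfolding F_def using I1 I2 I3 by auto
    have eqF: "(BT f y - BT f z) / (y - z) - D = (LINT t|lborel. F t)"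
      unfolding F_def BT_def BT1_def D_def h_def using I1 I2 I3 by simp
    have Fw: "F t = f t * gk z t * ((exp (w t) - 1 - w t) / h)" for t
      using h0 by (simp add: F_def gy w_def field_simps)
    have Fb: "norm (F t) \<le> 4 * pi\<^sup>2 * norm h * (cmod (f t) * Qm R t)" for t
    proof -
      have nw: "norm (w t) = 2 * pi * \<bar>t\<bar> * norm h"
        by (simp add: w_def norm_mult)
      have "norm (exp (w t) - 1 - w t) \<le> norm (w t) ^ 2 * exp (norm (w t))"
        by (rule norm_exp_sub_1_sub)
      also have "\<dots> \<le> norm (w t) ^ 2 * exp (2 * pi * \<bar>t\<bar>)"
        using h1 unfolding nw
        by (intro mult_left_mono) (auto intro!: mult_left_le simp: mult.assoc)
      also have "\<dots> = 4 * pi\<^sup>2 * norm h ^ 2 * (t\<^sup>2 * exp (2 * pi * \<bar>t\<bar>))"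
        unfolding nw by (simp add: power_mult_distrib power2_abs)
      finally have ew: "norm (exp (w t) - 1 - w t) / norm h
          \<le> 4 * pi\<^sup>2 * norm h * (t\<^sup>2 * exp (2 * pi * \<bar>t\<bar>))"
        using h0 by (simp add: divide_le_eq power2_eq_square mult_ac)
      have "norm (F t) = cmod (f t) * (cmod (gk z t) * (norm (exp (w t) - 1 - w t) / norm h))"
        by (simp add: Fw norm_mult norm_divide)
      also have "\<dots> \<le> cmod (f t) * (cmod (gk z t) * (4 * pi\<^sup>2 * norm h * (t\<^sup>2 * exp (2 * pi * \<bar>t\<bar>))))"
        by (intro mult_left_mono ew) auto
      also have "\<dots> = 4 * pi\<^sup>2 * norm h * (cmod (f t) * (cmod (gk z t) * (t\<^sup>2 * exp (2 * pi * \<bar>t\<bar>))))"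
        by (simp add: mult_ac)
      also have "\<dots> \<le> 4 * pi\<^sup>2 * norm h * (cmod (f t) * Qm R t)"
        by (intro mult_left_mono gk_err_bound) (auto simp: R_def)
      finally show ?thesis .
    qed
    have "norm (LINT t|lborel. F t) \<le> (LINT t|lborel. norm (F t))"
      by (rule integral_norm_bound)
    also have "\<dots> \<le> (LINT t|lborel. 4 * pi\<^sup>2 * norm h * (cmod (f t) * Qm R t))"
      by (rule integral_mono) (use IF Ii Fb in auto)
    also have "\<dots> = K * norm h" by (simp add: K_def)
    finally show ?thesis using eqF by (simp add: h_def)
  qed
  have "((\<lambda>y. (BT f y - BT f z) / (y - z) - D) \<longlongrightarrow> 0) (at z)"
  proof (rule Lim_null_comparison)
    show "\<forall>\<^sub>F y in at z. norm ((BT f y - BT f z) / (y - z) - D) \<le> K * norm (y - z)"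
      unfolding eventually_at using main
      by (intro exI[of _ 1]) (auto simp: dist_norm)
    have "((\<lambda>y. K * norm (y - z)) \<longlongrightarrow> K * norm (z - z)) (at z)"
      by (intro tendsto_intros)
    then show "((\<lambda>y. K * norm (y - z)) \<longlongrightarrow> 0) (at z)" by simp
  qed
  then have "((\<lambda>y. (BT f y - BT f z) / (y - z)) \<longlongrightarrow> D) (at z)"
    by (simp add: LIM_zero_iff)
  then show ?thesis unfolding D_def[symmetric] by (simp add: has_field_derivative_iff)
qed



lemma density_real_distribution:
  fixes g :: "real \<Rightarrow> real"
  assumes gm: "g \<in> borel_measurable borel" and g0: "\<And>x. g x \<ge> 0"
    and gi: "integrable lborel g" and g1: "(LINT x|lborel. g x) = 1"
  shows "real_distribution (density lborel (\<lambda>x. ennreal (g x)))"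
proof -
  have "emeasure (density lborel (\<lambda>x. ennreal (g x))) UNIV = (\<integral>\<^sup>+ x. ennreal (g x) \<partial>lborel)"
    using gm by (simp add: emeasure_density)
  also have "\<dots> = ennreal (LINT x|lborel. g x)"
    using gi g0 by (intro nn_integral_eq_integral) auto
  finally have e: "emeasure (density lborel (\<lambda>x. ennreal (g x))) UNIV = 1" using g1 by simp
  show ?thesis unfolding real_distribution_def real_distribution_axioms_def
    by (auto intro!: prob_spaceI simp: e)
qed

lemma char_density:
  fixes g :: "real \<Rightarrow> real"
  assumes gm: "g \<in> borel_measurable borel" and g0: "\<And>x. g x \<ge> 0"
  shows "char (density lborel (\<lambda>x. ennreal (g x))) t = (CLINT x|lborel. complex_of_real (g x) * iexp (t * x))"
  unfolding char_def using gm g0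
  by (subst integral_density) (auto simp: scaleR_conv_of_real)

lemma fourier_unique_real:
  fixes u :: "real \<Rightarrow> real"
  assumes ui: "integrable lborel u"
    and F: "\<And>t. (CLINT x|lborel. complex_of_real (u x) * iexp (t * x)) = 0"
  shows "AE x in lborel. u x = 0"
proof -
  define up where "up x = max (u x) 0" for x
  define um where "um x = max (- u x) 0" for x
  have um_m[measurable]: "um \<in> borel_measurable borel" and up_m[measurable]: "up \<in> borel_measurable borel"
    using ui unfolding up_def um_def by auto
  have upi: "integrable lborel up" and umi: "integrable lborel um"
    using ui unfolding up_def um_def by auto
  have upos: "\<And>x. up x \<ge> 0" "\<And>x. um x \<ge> 0" by (auto simp: up_def um_def)
  have ud: "u x = up x - um x" for x by (auto simp: up_def um_def)
  have ci: "integrable lborel (\<lambda>x. complex_of_real (v x) * iexp (t * x))"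
    if "integrable lborel v" "v \<in> borel_measurable borel" for v :: "real \<Rightarrow> real" and t
  proof (rule Bochner_Integration.integrable_bound[OF that(1)])
    show "(\<lambda>x. complex_of_real (v x) * iexp (t * x)) \<in> borel_measurable lborel"
      using that(2) by measurable
    show "AE x in lborel. norm (complex_of_real (v x) * iexp (t * x)) \<le> norm (v x)"
      by (auto simp: norm_mult)
  qed
  have eq: "(CLINT x|lborel. complex_of_real (up x) * iexp (t * x)) =
            (CLINT x|lborel. complex_of_real (um x) * iexp (t * x))" for t
  proof -
    have "(CLINT x|lborel. complex_of_real (up x) * iexp (t * x)) -
          (CLINT x|lborel. complex_of_real (um x) * iexp (t * x)) =
          (CLINT x|lborel. complex_of_real (up x) * iexp (t * x) - complex_of_real (um x) * iexp (t * x))"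
      by (rule Bochner_Integration.integral_diff[symmetric, OF ci[OF upi up_m] ci[OF umi um_m]])
    also have "\<dots> = (CLINT x|lborel. complex_of_real (u x) * iexp (t * x))"
      by (simp add: ud algebra_simps)
    finally show ?thesis using F[of t] by simp
  qed
  have mm: "(LINT x|lborel. up x) = (LINT x|lborel. um x)"
  proof -
    have "complex_of_real (LINT x|lborel. up x) = (CLINT x|lborel. complex_of_real (up x) * iexp (0 * x))"
      by simp
    also have "\<dots> = (CLINT x|lborel. complex_of_real (um x) * iexp (0 * x))" by (rule eq)
    also have "\<dots> = complex_of_real (LINT x|lborel. um x)" by simp
    finally show ?thesis by simp
  qed
  define m where "m = (LINT x|lborel. up x)"
  have m0: "m \<ge> 0" unfolding m_def using upos by simp
  have AEeq: "AE x in lborel. up x = um x"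
  proof (cases "m = 0")
    case True
    have "AE x in lborel. up x = 0"
      using True upi upos unfolding m_def by (subst integral_nonneg_eq_0_iff_AE[symmetric]) auto
    moreover have "AE x in lborel. um x = 0"
      using True mm umi upos unfolding m_def by (subst integral_nonneg_eq_0_iff_AE[symmetric]) auto
    ultimately show ?thesis by eventually_elim simp
  next
    case False
    then have mp: "m > 0" using m0 by simp
    define M1 where "M1 = density lborel (\<lambda>x. ennreal (up x / m))"
    define M2 where "M2 = density lborel (\<lambda>x. ennreal (um x / m))"
    have d1: "real_distribution M1" unfolding M1_def
      by (rule density_real_distribution) (use upi upos mp in \<open>auto simp: m_def\<close>)
    have d2: "real_distribution M2" unfolding M2_def
      by (rule density_real_distribution) (use umi upos mp mm in \<open>auto simp: m_def\<close>)
    have "char M1 = char M2"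
    proof
      fix t
      have "char M1 t = (CLINT x|lborel. complex_of_real (up x) * iexp (t * x)) / m"
        unfolding M1_def using upos mp
        by (subst char_density) (auto simp: divide_simps)
      also have "\<dots> = (CLINT x|lborel. complex_of_real (um x) * iexp (t * x)) / m"
        using eq[of t] by simp
      also have "\<dots> = char M2 t"
        unfolding M2_def using upos mp
        by (subst char_density) (auto simp: divide_simps)
      finally show "char M1 t = char M2 t" .
    qed
    from Levy_uniqueness[OF d1 d2 this] have M12: "M1 = M2" .
    have upi': "integrable lborel (\<lambda>x. up x / m)" using upi by simp
    have fin: "(\<integral>\<^sup>+ x. ennreal (up x / m) \<partial>lborel) \<noteq> \<top>"
      by (subst nn_integral_eq_integral[OF upi']) (use upos mp in auto)
    have "AE x in lborel. up x / m = um x / m"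
      using M12 unfolding M1_def M2_def using upos mp fin
      by (subst (asm) finite_density_unique) (auto simp: ennreal_inj)
    then show ?thesis by eventually_elim (use mp in auto)
  qed
  then show ?thesis
    by eventually_elim (auto simp: up_def um_def)
qed



lemma fourier_unique:
  fixes g :: "real \<Rightarrow> complex"
  assumes gi: "integrable lborel g" and F: "\<And>\<xi>. fourier g \<xi> = 0"
  shows "AE x in lborel. g x = 0"
proof -
  have gm[measurable]: "g \<in> borel_measurable borel" using gi by (simp add: borel_measurable_integrable)
  have ig: "integrable lborel (\<lambda>x. g x * iexp (t * x))" for t
    by (rule Bochner_Integration.integrable_bound[OF integrable_norm[OF gi]]) (auto simp: norm_mult)
  have gc: "integrable lborel (\<lambda>x. cnj (g x))" using gi by simp
  have gcm[measurable]: "(\<lambda>x. cnj (g x)) \<in> borel_measurable borel"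
    using borel_measurable_integrable[OF gc] by simp
  have igc: "integrable lborel (\<lambda>x. cnj (g x) * iexp (t * x))" for t
    by (rule Bochner_Integration.integrable_bound[OF integrable_norm[OF gi]]) (auto simp: norm_mult)
  have A: "(CLINT x|lborel. g x * iexp (t * x)) = 0" for t
  proof -
    have "(CLINT x|lborel. g x * iexp (t * x)) = fourier g (- t / (2 * pi))"
      unfolding fourier_def by (rule Bochner_Integration.integral_cong) (auto simp: cis_conv_exp mult.commute)
    then show ?thesis using F by simp
  qed
  have B: "(CLINT x|lborel. cnj (g x) * iexp (t * x)) = 0" for t
  proof -
    have "(CLINT x|lborel. cnj (g x) * iexp (t * x)) = (CLINT x|lborel. cnj (g x * iexp (- t * x)))"
      by (rule Bochner_Integration.integral_cong) (auto simp: exp_cnj)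
    also have "\<dots> = cnj (CLINT x|lborel. g x * iexp (- t * x))" by (rule Bochner_Integration.integral_cnj)
    also have "\<dots> = 0" using A[of "- t"] by simp
    finally show ?thesis .
  qed
  have re: "AE x in lborel. Re (g x) = 0"
  proof (rule fourier_unique_real)
    show "integrable lborel (\<lambda>x. Re (g x))" using gi by simp
    fix t
    have "(CLINT x|lborel. complex_of_real (Re (g x)) * iexp (t * x)) =
          (CLINT x|lborel. (g x * iexp (t * x) + cnj (g x) * iexp (t * x)) / 2)"
    proof (rule Bochner_Integration.integral_cong)
      fix x
      have e: "complex_of_real (Re (g x)) = (g x + cnj (g x)) / 2" by (simp add: complex_eq_iff)
      show "complex_of_real (Re (g x)) * iexp (t * x) =
          (g x * iexp (t * x) + cnj (g x) * iexp (t * x)) / 2"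
        unfolding e by (simp add: algebra_simps add_divide_distrib)
    qed simp
    also have "\<dots> = 0" using ig[of t] igc[of t] A[of t] B[of t] by simp
    finally show "(CLINT x|lborel. complex_of_real (Re (g x)) * iexp (t * x)) = 0" .
  qed
  have im: "AE x in lborel. Im (g x) = 0"
  proof (rule fourier_unique_real)
    show "integrable lborel (\<lambda>x. Im (g x))" using gi by simp
    fix t
    have "(CLINT x|lborel. complex_of_real (Im (g x)) * iexp (t * x)) =
          (CLINT x|lborel. (g x * iexp (t * x) - cnj (g x) * iexp (t * x)) / (2 * \<i>))"
    proof (rule Bochner_Integration.integral_cong)
      fix x
      have e: "complex_of_real (Im (g x)) = (g x - cnj (g x)) / (2 * \<i>)" by (simp add: complex_eq_iff)
      show "complex_of_real (Im (g x)) * iexp (t * x) =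
          (g x * iexp (t * x) - cnj (g x) * iexp (t * x)) / (2 * \<i>)"
        unfolding e by (simp add: algebra_simps diff_divide_distrib)
    qed simp
    also have "\<dots> = 0" using ig[of t] igc[of t] A[of t] B[of t] by simp
    finally show "(CLINT x|lborel. complex_of_real (Im (g x)) * iexp (t * x)) = 0" .
  qed
  from re im show ?thesis by eventually_elim (simp add: complex_eq_iff)
qed



lemma cnj_measurable[measurable]: "cnj \<in> borel_measurable borel"
  by (intro borel_measurable_continuous_onI continuous_intros)

lemma gk_real_eq: "gk (complex_of_real \<xi>) t = gamma1 t * cis (- 2 * pi * t * \<xi>)"
proof -
  have "gk (complex_of_real \<xi>) t = exp (complex_of_real (- pi * t\<^sup>2) + \<i> * complex_of_real (- 2 * pi * t * \<xi>))"
    unfolding gk_def by (rule arg_cong[where f=exp]) (simp add: algebra_simps)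
  also have "\<dots> = gamma1 t * cis (- 2 * pi * t * \<xi>)"
    by (simp only: exp_add gamma1_def cis_conv_exp exp_of_real)
  finally show ?thesis .
qed

lemma BT_holo: "f \<in> L2 \<Longrightarrow> BT f holomorphic_on UNIV"
  using BT_deriv by (auto simp: holomorphic_on_open)

lemma BT_deriv_eq: "f \<in> L2 \<Longrightarrow> deriv (BT f) z = (- 2 * complex_of_real pi * \<i>) * BT1 f z"
  using BT_deriv DERIV_imp_deriv by blast

lemma fourier_gamma1: "fourier (\<lambda>t. gamma1 t * f t) \<xi> = BT f (complex_of_real \<xi>)"
  unfolding fourier_def BT_def
proof (rule Bochner_Integration.integral_cong)
  fix t
  show "gamma1 t * f t * cis (- 2 * pi * t * \<xi>) = f t * gk (complex_of_real \<xi>) t"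
    by (simp add: gk_real_eq)
qed simp

lemma fourier_gamma2: "fourier (\<lambda>t. gamma2 t * f t) \<xi> = 2 * complex_of_real pi * BT1 f (complex_of_real \<xi>)"
proof -
  have "fourier (\<lambda>t. gamma2 t * f t) \<xi> =
        (LINT t|lborel. 2 * complex_of_real pi * (complex_of_real t * f t * gk (complex_of_real \<xi>) t))"
    unfolding fourier_def
  proof (rule Bochner_Integration.integral_cong)
    fix t
    show "gamma2 t * f t * cis (- 2 * pi * t * \<xi>) =
          2 * complex_of_real pi * (complex_of_real t * f t * gk (complex_of_real \<xi>) t)"
      by (simp add: gk_real_eq gamma2_def gamma1_def)
  qed simp
  then show ?thesis by (simp add: BT1_def)
qed

lemma BT_lin:
  assumes "f \<in> L2" "g \<in> L2"
  shows "BT (\<lambda>t. f t - c * g t) z = BT f z - c * BT g z"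
proof -
  have "BT (\<lambda>t. f t - c * g t) z = (LINT t|lborel. f t * gk z t - c * (g t * gk z t))"
    unfolding BT_def by (rule Bochner_Integration.integral_cong) (auto simp: algebra_simps)
  also have "\<dots> = BT f z - c * BT g z"
    unfolding BT_def using BT_integrable(1)[OF assms(1)] BT_integrable(1)[OF assms(2)] by simp
  finally show ?thesis .
qed

lemma gamma1_integrable:
  assumes f: "f \<in> L2"
  shows "integrable lborel (\<lambda>t. gamma1 t * f t)"
proof (rule Bochner_Integration.integrable_bound[OF L2_Qm_integrable[OF f order_refl]])
  have "f \<in> borel_measurable lborel" using f by (simp add: L2_def)
  then show "(\<lambda>t. gamma1 t * f t) \<in> borel_measurable lborel" unfolding gamma1_def by measurable
  show "AE x in lborel. norm (gamma1 x * f x) \<le> norm (cmod (f x) * Qm 0 x)"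
  proof (rule AE_I2)
    fix x
    have "exp (- pi * x\<^sup>2) \<le> Qm 0 x" unfolding Qm_def
      by (simp add: mult_le_cancel_right1)
    then have "cmod (f x) * exp (- pi * x\<^sup>2) \<le> cmod (f x) * Qm 0 x"
      by (rule mult_left_mono) simp
    then show "norm (gamma1 x * f x) \<le> norm (cmod (f x) * Qm 0 x)"
      using Qm_nonneg[of 0 x] by (simp add: gamma1_def norm_mult mult.commute)
  qed
qed

lemma L2_reflect:
  assumes f: "f \<in> L2"
  shows "(\<lambda>x. cnj (f (- x))) \<in> L2"
proof -
  have fm[measurable]: "f \<in> borel_measurable borel" and fi: "integrable lborel (\<lambda>x. (cmod (f x))\<^sup>2)"
    using f by (auto simp: L2_def)
  have "integrable lborel (\<lambda>x. (cmod (f (0 + (-1) * x)))\<^sup>2)"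
    by (rule lborel_integrable_real_affine[OF fi]) simp
  then show ?thesis by (simp add: L2_def)
qed

lemma BT_reflect:
  assumes f: "f \<in> L2"
  shows "BT (\<lambda>x. cnj (f (- x))) (complex_of_real \<xi>) = cnj (BT f (complex_of_real \<xi>))"
proof -
  have "cnj (BT f (complex_of_real \<xi>)) = (LINT t|lborel. cnj (f t * gk (complex_of_real \<xi>) t))"
    unfolding BT_def by (rule Bochner_Integration.integral_cnj[symmetric])
  also have "\<dots> = (LINT t|lborel. cnj (f t) * gk (complex_of_real \<xi>) (- t))"
    by (rule Bochner_Integration.integral_cong) (auto simp: gk_def exp_cnj)
  also have "\<dots> = (LINT t|lborel. cnj (f (- t)) * gk (complex_of_real \<xi>) t)"
    by (subst lborel_integral_real_affine[where c="-1" and t=0]) auto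
  finally show ?thesis by (simp add: BT_def)
qed

lemma recover:
  assumes f: "f \<in> L2" and g: "g \<in> L2"
    and eq: "\<And>\<xi>::real. BT g \<xi> = c * BT f \<xi>"
  shows "AE x in lborel. g x = c * f x"
proof -
  have i: "integrable lborel (\<lambda>t. gamma1 t * g t - c * (gamma1 t * f t))"
    using gamma1_integrable[OF f] gamma1_integrable[OF g] by simp
  have "AE x in lborel. gamma1 x * g x - c * (gamma1 x * f x) = 0"
  proof (rule fourier_unique[OF i])
    fix \<xi>
    have "fourier (\<lambda>t. gamma1 t * g t - c * (gamma1 t * f t)) \<xi>
        = fourier (\<lambda>t. gamma1 t * (g t - c * f t)) \<xi>"
      unfolding fourier_def by (simp add: algebra_simps)
    also have "\<dots> = BT (\<lambda>t. g t - c * f t) \<xi>" by (rule fourier_gamma1)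
    also have "\<dots> = 0" using eq[of \<xi>] by (simp add: BT_lin[OF g f])
    finally show "fourier (\<lambda>t. gamma1 t * g t - c * (gamma1 t * f t)) \<xi> = 0" .
  qed
  then show ?thesis
  proof eventually_elim
    case (elim x)
    have "gamma1 x * (g x - c * f x) = 0" using elim by (simp add: algebra_simps)
    moreover have "gamma1 x \<noteq> 0" by (simp add: gamma1_def)
    ultimately show ?case by simp
  qed
qed



theorem mainTheorem1:
  fixes \<phi> \<psi> :: "real \<Rightarrow> complex"
  assumes "\<phi> \<in> L2" and "\<psi> \<in> L2"
    and "\<And>\<xi>. cmod (fourier (\<lambda>t. gamma1 t * \<phi> t) \<xi>) = cmod (fourier (\<lambda>t. gamma1 t * \<psi> t) \<xi>)"
    and "\<And>\<xi>. cmod (fourier (\<lambda>t. gamma2 t * \<phi> t) \<xi>) = cmod (fourier (\<lambda>t. gamma2 t * \<psi> t) \<xi>)"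
  shows "\<exists>c::complex. cmod c = 1 \<and>
           ((AE x in lborel. \<psi> x = c * \<phi> x) \<or> (AE x in lborel. \<psi> x = c * cnj (\<phi> (- x))))"
proof -
  note f = assms(1) and g = assms(2)
  have n0: "cmod (BT \<phi> x) = cmod (BT \<psi> x)" for x :: real
    using assms(3)[of x] by (simp add: fourier_gamma1)
  have dn: "cmod (deriv (BT h) x) = cmod (fourier (\<lambda>t. gamma2 t * h t) x)" if "h \<in> L2" for h and x :: real
    by (simp add: BT_deriv_eq[OF that] fourier_gamma2 norm_mult)
  have n1: "cmod (deriv (BT \<phi>) x) = cmod (deriv (BT \<psi>) x)" for x :: real
    using assms(4)[of x] dn[OF f, of x] dn[OF g, of x] by simp
  from core2[OF BT_holo[OF f] BT_holo[OF g] n0 n1]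
  obtain c where c1: "cmod c = 1"
    and cases: "(\<forall>z. BT \<psi> z = c * BT \<phi> z) \<or> (\<forall>z. BT \<psi> z = c * cnj (BT \<phi> (cnj z)))"
    by blast
  from cases show ?thesis
  proof
    assume h: "\<forall>z. BT \<psi> z = c * BT \<phi> z"
    have "AE x in lborel. \<psi> x = c * \<phi> x"
      by (rule recover[OF f g]) (use h in blast)
    then show ?thesis using c1 by blast
  next
    assume h: "\<forall>z. BT \<psi> z = c * cnj (BT \<phi> (cnj z))"
    have "AE x in lborel. \<psi> x = c * cnj (\<phi> (- x))"
    proof (rule recover[OF L2_reflect[OF f] g])
      fix \<xi> :: real
      show "BT \<psi> \<xi> = c * BT (\<lambda>x. cnj (\<phi> (- x))) \<xi>"
        using h[rule_format, of "complex_of_real \<xi>"] by (simp add: BT_reflect[OF f])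
    qed
    then show ?thesis using c1 by blast
  qed
qed

end
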